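(* Let Assumption 1 hold and suppose $n_k\ge N-1$ for some $k\in[L-1]$. Then for any $(W^0_l,b^0_l)_{l=1}^k$ and every $\epsilon>0$ there exists $(W_l,b_l)_{l=1}^k$ in the open Euclidean ball of radius $\epsilon$ around $(W^0_l,b^0_l)_{l=1}^k$ such that $\operatorname{rank}([F_k,\mathbf{1}_N])=N$, where $F_k$ is computed with the parameters $(W_l,b_l)_{l=1}^k$.
   Context: Training inputs $x_1,\dots,x_N\in\mathbb{R}^d$. A fully connected network with widths $n_0=d,n_1,\dots$, weights $W_l\in\mathbb{R}^{n_{l-1}\times n_l}$, biases $b_l\in\mathbb{R}^{n_l}$; with $\sigma$ applied componentwise, $f_0(x)=x$, $f_l(x)=\sigma(W_l^Tf_{l-1}(x)+b_l)$. $F_k\in\mathbb{R}^{N\times n_k}$ has $i$-th row $f_k(x_i)^T$; $\mathbf{1}_N$ is the all-ones vector. Parameters of the first $k$ layers are identified with a vector in Euclidean space. Assumption 1 (relevant parts): (1) $x_i\neq x_j$ for all $i\neq j$; (2) $\sigma$ is real analytic on $\mathbb{R}$ with $\sigma'(t)>0$ for all $t$, and either (a) $\sigma$ is bounded or (b) there are positive $\rho_1,\rho_2,\rho_3,\rho_4$ with $|\sigma(t)|\le\rho_1e^{\rho_2t}$ for $t<0$ and $|\sigma(t)|\le\rho_3t+\rho_4$ for $t\ge0$. *)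

theory Defs
  imports Complex_Main "Jordan_Normal_Form.DL_Rank"
begin

definition real_analytic_on_R :: "(real \<Rightarrow> real) \<Rightarrow> bool" where
  "real_analytic_on_R \<sigma> \<longleftrightarrow>
     (\<forall>x. \<exists>r>0. \<exists>a :: nat \<Rightarrow> real. \<forall>y. \<bar>y - x\<bar> < r \<longrightarrow> (\<lambda>m. a m * (y - x) ^ m) sums \<sigma> y)"

text \<open>Vectors are functions nat => real, meaningful on indices below the width.
  W l i j is the (i,j) entry of W_l (an n_(l-1) x n_l matrix), b l j the j-th entry of b_l.
  f_0(x) = x, f_l(x) = sigma(W_l^T f_(l-1)(x) + b_l).\<close>
fun layer :: "(real \<Rightarrow> real) \<Rightarrow> (nat \<Rightarrow> nat) \<Rightarrow> (nat \<Rightarrow> nat \<Rightarrow> nat \<Rightarrow> real)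
              \<Rightarrow> (nat \<Rightarrow> nat \<Rightarrow> real) \<Rightarrow> nat \<Rightarrow> (nat \<Rightarrow> real) \<Rightarrow> (nat \<Rightarrow> real)" where
  "layer \<sigma> n W b 0 x = x"
| "layer \<sigma> n W b (Suc l) x =
     (\<lambda>j. \<sigma> ((\<Sum>i<n l. W (Suc l) i j * layer \<sigma> n W b l x i) + b (Suc l) j))"

definition feat_ones :: "(real \<Rightarrow> real) \<Rightarrow> (nat \<Rightarrow> nat) \<Rightarrow> (nat \<Rightarrow> nat \<Rightarrow> nat \<Rightarrow> real)
              \<Rightarrow> (nat \<Rightarrow> nat \<Rightarrow> real) \<Rightarrow> nat \<Rightarrow> nat \<Rightarrow> (nat \<Rightarrow> nat \<Rightarrow> real) \<Rightarrow> real mat" where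
  "feat_ones \<sigma> n W b k N x =
     mat N (n k + 1) (\<lambda>(i, j). if j < n k then layer \<sigma> n W b k (x i) j else 1)"

definition param_dist :: "(nat \<Rightarrow> nat) \<Rightarrow> nat \<Rightarrow> (nat \<Rightarrow> nat \<Rightarrow> nat \<Rightarrow> real) \<Rightarrow> (nat \<Rightarrow> nat \<Rightarrow> real)
              \<Rightarrow> (nat \<Rightarrow> nat \<Rightarrow> nat \<Rightarrow> real) \<Rightarrow> (nat \<Rightarrow> nat \<Rightarrow> real) \<Rightarrow> real" where
  "param_dist n k W b W' b' =
     sqrt (\<Sum>l\<in>{1..k}. (\<Sum>i<n (l - 1). \<Sum>j<n l. (W l i j - W' l i j)\<^sup>2)
                        + (\<Sum>j<n l. (b l j - b' l j)\<^sup>2))"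

end

theory Submission
  imports Defs "HOL-Computational_Algebra.Fundamental_Theorem_Algebra"
begin


lemma powser_onesided_zero0:
  fixes c :: "nat \<Rightarrow> real"
  assumes eta: "\<eta> > 0" and H: "\<And>h. 0 < h \<Longrightarrow> h < \<eta> \<Longrightarrow> (\<lambda>m. c m * h ^ m) sums 0"
  shows "c 0 = 0"
proof -
  define s where "s = \<eta> / 2"
  have s: "0 < s" "s < \<eta>" using eta by (auto simp: s_def)
  have sm: "summable (\<lambda>m. c m * s ^ m)" using H[OF s] sums_summable by blast
  have sm2: "(\<lambda>m. c m * x ^ m) sums (\<Sum>m. c m * x ^ m)" if "norm x < s" for x
  proof -
    have "summable (\<lambda>m. norm (c m * x ^ m))" by (rule powser_insidea[OF sm]) (use that s in simp)
    then show ?thesis by (rule summable_sums[OF summable_norm_cancel])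
  qed
  have lim: "((\<lambda>x. \<Sum>m. c m * x ^ m) \<longlongrightarrow> c 0) (at 0)"
    by (rule powser_limit_0[OF s(1) sm2])
  then have lim1: "((\<lambda>x. \<Sum>m. c m * x ^ m) \<longlongrightarrow> c 0) (at_right 0)"
    using tendsto_within_subset[OF lim, of "{0<..}"] by simp
  have ev: "eventually (\<lambda>x. (\<Sum>m. c m * x ^ m) = 0) (at_right (0::real))"
    unfolding eventually_at_right_field
  proof (intro exI[of _ s] conjI allI impI)
    fix y :: real assume "0 < y" "y < s" then show "(\<Sum>m. c m * y ^ m) = 0"
      using H[of y] s sums_unique[of _ 0] by auto
  qed (use s in auto)
  have lim2: "((\<lambda>x. \<Sum>m. c m * x ^ m) \<longlongrightarrow> 0) (at_right 0)"
    using tendsto_eventually[OF ev] .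
  show ?thesis using tendsto_unique[OF _ lim1 lim2] by simp
qed

lemma powser_onesided_zero:
  fixes c :: "nat \<Rightarrow> real"
  assumes eta: "\<eta> > 0" and H: "\<And>h. 0 < h \<Longrightarrow> h < \<eta> \<Longrightarrow> (\<lambda>m. c m * h ^ m) sums 0"
  shows "c m = 0"
proof (induction m rule: less_induct)
  case (less m)
  have "(\<lambda>j. c (j + m) * h ^ j) sums 0" if h: "0 < h" "h < \<eta>" for h
  proof -
    have "(\<lambda>j. c (j + m) * h ^ (j + m)) sums (0 - (\<Sum>i<m. c i * h ^ i))"
      using sums_split_initial_segment[OF H[OF h], of m] by simp
    also have "(\<Sum>i<m. c i * h ^ i) = 0" using less by simp
    finally have "(\<lambda>j. c (j + m) * h ^ (j + m) * (1 / h ^ m)) sums (0 * (1 / h^m))"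
      by (intro sums_mult2) simp
    then show ?thesis using h by (simp add: power_add field_simps)
  qed
  from powser_onesided_zero0[OF eta this] show ?case by simp
qed



lemma coeff_lin_power: "coeff ([:1, a:] ^ m) j = of_nat (m choose j) * (a::real) ^ j"
proof (induction m arbitrary: j)
  case 0
  then show ?case by (cases j) auto
next
  case (Suc m)
  have e: "[:1, a:] ^ Suc m = [:1,a:]^m + pCons 0 (smult a ([:1,a:]^m))"
    by (simp add: mult_pCons_left)
  show ?case
  proof (cases j)
    case 0 then show ?thesis using Suc by (simp add: e)
  next
    case (Suc j')
    then show ?thesis using Suc.IH by (simp add: e algebra_simps)
  qed
qed

lemma vandermonde_zero:
  fixes s c :: "nat \<Rightarrow> real"
  assumes dist: "\<forall>i<N. \<forall>j<N. i \<noteq> j \<longrightarrow> s i \<noteq> s j"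
    and m: "N - 1 \<le> m"
    and H: "\<forall>p. (\<Sum>i<N. c i * (p * s i + 1) ^ m) = 0"
  shows "\<forall>i<N. c i = 0"
proof -
  define Q where "Q = (\<Sum>i<N. smult (c i) ([:1, s i:] ^ m))"
  have "poly Q p = 0" for p
    using H[rule_format, of p] by (simp add: Q_def poly_sum algebra_simps)
  then have Q0: "Q = 0" using poly_all_0_iff_0 by blast
  have ps: "(\<Sum>i<N. c i * s i ^ j) = 0" if j: "j \<le> m" for j
  proof -
    have "0 = coeff Q j" using Q0 by simp
    also have "\<dots> = of_nat (m choose j) * (\<Sum>i<N. c i * s i ^ j)"
      by (simp add: Q_def coeff_sum coeff_lin_power sum_distrib_left algebra_simps)
    finally show ?thesis using j by simp
  qed
  show ?thesis
  proof (intro allI impI)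
    fix j0 assume j0: "j0 < N"
    define g where "g = (\<Prod>i\<in>{..<N} - {j0}. [:- s i, 1:])"
    have "degree g \<le> sum (degree \<circ> (\<lambda>i. [:- s i, 1:])) ({..<N} - {j0})"
      unfolding g_def by (rule degree_prod_sum_le) simp
    also have "\<dots> = card ({..<N} - {j0})" by simp
    also have "\<dots> = N - 1" using j0 by simp
    finally have dg: "degree g \<le> m" using m by simp
    have "(\<Sum>i<N. c i * poly g (s i)) = (\<Sum>i<N. c i * (\<Sum>a\<le>degree g. coeff g a * s i ^ a))"
      by (simp add: poly_altdef)
    also have "\<dots> = (\<Sum>a\<le>degree g. coeff g a * (\<Sum>i<N. c i * s i ^ a))"
      by (simp add: sum_distrib_left sum_distrib_right algebra_simps sum.swap[of _ "{..<N}"])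
    also have "\<dots> = 0" using ps dg by simp
    finally have S0: "(\<Sum>i<N. c i * poly g (s i)) = 0" .
    have pz: "poly g (s i) = 0" if "i < N" "i \<noteq> j0" for i
      using that unfolding g_def poly_prod by (intro prod_zero) auto
    have pnz: "poly g (s j0) \<noteq> 0"
      unfolding g_def poly_prod using dist j0 by (subst prod_zero_iff) auto
    have "(\<Sum>i<N. c i * poly g (s i)) = c j0 * poly g (s j0)"
      using j0 pz by (subst sum.remove[of _ j0]) (auto intro!: sum.neutral)
    then show "c j0 = 0" using S0 pnz by simp
  qed
qed




lemma poly_powser_sums:
  fixes q :: "real poly"
  shows "(\<lambda>m. coeff q m * h ^ m) sums poly q h"
proof -
  have "(\<lambda>m. coeff q m * h ^ m) sums (\<Sum>m\<in>{..degree q}. coeff q m * h ^ m)"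
    by (rule sums_finite) (auto simp: coeff_eq_0)
  then show ?thesis by (simp add: poly_altdef)
qed

lemma analytic_poly_extend_left:
  fixes \<sigma> :: "real \<Rightarrow> real" and P :: "real poly"
  assumes an: "real_analytic_on_R \<sigma>" and cont: "\<And>t. isCont \<sigma> t"
    and r: "r > 0" and eq: "\<And>y. \<bar>y - z\<bar> < r \<Longrightarrow> \<sigma> y = poly P y"
  shows "\<forall>y \<le> z. \<sigma> y = poly P y"
proof (rule ccontr)
  assume "\<not> ?thesis"
  then obtain y0 where y0: "y0 \<le> z" "\<sigma> y0 \<noteq> poly P y0" by auto
  define A where "A = {u. u \<le> z \<and> (\<forall>y. u \<le> y \<and> y \<le> z \<longrightarrow> \<sigma> y = poly P y)}"
  have zA: "z - r/2 \<in> A" unfolding A_def using r eq by auto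
  have lb: "y0 < u" if "u \<in> A" for u
  proof (rule ccontr)
    assume "\<not> y0 < u" then have "u \<le> y0" by simp
    with that y0 show False unfolding A_def by auto
  qed
  have Ane: "A \<noteq> {}" using zA by auto
  have bdd: "bdd_below A" by (intro bdd_belowI[of _ y0]) (simp add: lb less_imp_le)
  define T where "T = Inf A"
  have Tz: "T \<le> z - r/2" unfolding T_def by (rule cInf_lower[OF zA bdd])
  have c1: "\<sigma> y = poly P y" if "T < y" "y \<le> z" for y
  proof -
    have "Inf A < y" using that T_def by simp
    then obtain u where "u \<in> A" "u < y" using cInf_less_iff[OF Ane bdd] by auto
    then show ?thesis using that unfolding A_def by auto
  qed
  define g where "g = (\<lambda>y. \<sigma> y - poly P y)"
  have gc: "isCont g T" unfolding g_def by (intro continuous_intros cont)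
  have "g T = 0"
  proof -
    have l1: "(g \<longlongrightarrow> g T) (at_right T)"
      using tendsto_within_subset[OF gc[unfolded isCont_def], of "{T<..}"] by simp
    have ev: "eventually (\<lambda>y. g y = 0) (at_right T)"
      unfolding eventually_at_right_field
    proof (intro exI[of _ z] conjI allI impI)
      fix y assume "T < y" "y < z" then show "g y = 0" by (simp add: g_def c1)
    qed (use Tz r in simp)
    have l2: "(g \<longlongrightarrow> 0) (at_right T)" using tendsto_eventually[OF ev] .
    show ?thesis using tendsto_unique[OF _ l1 l2] by simp
  qed
  then have c2: "\<sigma> y = poly P y" if "T \<le> y" "y \<le> z" for y
    using c1 that by (cases "y = T") (auto simp: g_def)
  obtain \<rho> a where rho: "\<rho> > 0" and ser: "\<And>y. \<bar>y - T\<bar> < \<rho> \<Longrightarrow> (\<lambda>m. a m * (y - T) ^ m) sums \<sigma> y"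
    using an unfolding real_analytic_on_R_def by blast
  define q where "q = pcompose P [:T, 1:]"
  have pq: "poly q h = poly P (T + h)" for h by (simp add: q_def poly_pcompose)
  define d where "d = (\<lambda>m. a m - coeff q m)"
  have dser: "(\<lambda>m. d m * h ^ m) sums (\<sigma> (T + h) - poly P (T + h))" if "\<bar>h\<bar> < \<rho>" for h
  proof -
    have "(\<lambda>m. a m * ((T + h) - T) ^ m - coeff q m * h ^ m) sums (\<sigma> (T + h) - poly q h)"
      by (intro sums_diff ser poly_powser_sums) (use that in simp)
    then show ?thesis by (simp add: d_def pq algebra_simps)
  qed
  define \<eta> where "\<eta> = min \<rho> (z - T)"
  have eta: "\<eta> > 0" using rho Tz r by (simp add: \<eta>_def)
  have d0: "d m = 0" for m
  proof (rule powser_onesided_zero[OF eta])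
    fix h :: real assume h: "0 < h" "h < \<eta>"
    then have "\<sigma> (T + h) - poly P (T + h) = 0" using c2[of "T + h"] by (simp add: \<eta>_def)
    then show "(\<lambda>m. d m * h ^ m) sums 0" using dser[of h] h by (simp add: \<eta>_def)
  qed
  then have c3: "\<sigma> y = poly P y" if "\<bar>y - T\<bar> < \<rho>" for y
  proof -
    have "(\<lambda>m. 0::real) sums (\<sigma> y - poly P y)" using dser[of "y - T"] that d0 by simp
    from sums_unique2[OF this sums_zero] show ?thesis by simp
  qed
  have "T - \<rho>/2 \<in> A" unfolding A_def
  proof (safe)
    show "T - \<rho> / 2 \<le> z" using Tz r rho by simp
    fix y assume "T - \<rho> / 2 \<le> y" "y \<le> z"
    then show "\<sigma> y = poly P y" using c2 c3 rho by (cases "T \<le> y") auto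
  qed
  then have "T \<le> T - \<rho>/2" unfolding T_def by (rule cInf_lower[OF _ bdd])
  then show False using rho by simp
qed

lemma poly_bounded_left_const:
  fixes P :: "real poly"
  assumes "\<And>y. y \<le> c \<Longrightarrow> \<bar>poly P y\<bar> \<le> M"
  shows "poly P y = coeff P 0"
proof (cases "degree P = 0")
  case True
  then show ?thesis by (simp add: poly_altdef)
next
  case False
  obtain a p where P: "P = pCons a p" by (cases P) auto
  have "p \<noteq> 0" using False P by auto
  from poly_infinity[OF this, of "M + 1" a] obtain R where
    R: "\<And>z. R \<le> norm z \<Longrightarrow> M + 1 \<le> norm (poly (pCons a p) z)" by blast
  define y where "y = - (\<bar>R\<bar> + \<bar>c\<bar> + 1)"
  have "M + 1 \<le> \<bar>poly P y\<bar>" using R[of y] P by (simp add: y_def)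
  moreover have "\<bar>poly P y\<bar> \<le> M" using assms[of y] by (simp add: y_def)
  ultimately show ?thesis by simp
qed

lemma not_locally_poly:
  fixes \<sigma> :: "real \<Rightarrow> real" and P :: "real poly"
  assumes an: "real_analytic_on_R \<sigma>"
    and deriv_pos: "\<forall>t. \<exists>D. (\<sigma> has_real_derivative D) (at t) \<and> D > 0"
    and bdd: "\<And>t. t < 0 \<Longrightarrow> \<bar>\<sigma> t\<bar> \<le> M"
    and r: "r > 0" and eq: "\<And>y. \<bar>y - z\<bar> < r \<Longrightarrow> \<sigma> y = poly P y"
  shows False
proof -
  have cont: "isCont \<sigma> t" for t using deriv_pos DERIV_isCont by blast
  have left: "\<forall>y \<le> z. \<sigma> y = poly P y" by (rule analytic_poly_extend_left[OF an cont r eq])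
  have "\<bar>poly P y\<bar> \<le> M" if "y \<le> min z (-1)" for y
    using left bdd[of y] that by auto
  then have const: "poly P y = coeff P 0" for y by (rule poly_bounded_left_const)
  obtain D where D: "(\<sigma> has_real_derivative D) (at z)" "D > 0" using deriv_pos by blast
  have "((\<lambda>_. coeff P 0) has_real_derivative D) (at z)"
    by (rule has_field_derivative_transform_within_open[OF D(1), of "{z - r <..< z + r}"])
       (use r eq const in \<open>auto simp: abs_less_iff\<close>)
  moreover have "((\<lambda>_. coeff P 0) has_real_derivative 0) (at z)" by simp
  ultimately have "D = 0" by (rule DERIV_unique)
  then show False using D by simp
qed




lemma column_nonzero:
  fixes \<sigma> :: "real \<Rightarrow> real" and z s lam :: "nat \<Rightarrow> real"
  assumes an: "real_analytic_on_R \<sigma>"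
    and deriv_pos: "\<forall>t. \<exists>D. (\<sigma> has_real_derivative D) (at t) \<and> D > 0"
    and bdd: "\<And>t. t < 0 \<Longrightarrow> \<bar>\<sigma> t\<bar> \<le> M"
    and dist: "\<forall>i<N. \<forall>j<N. i \<noteq> j \<longrightarrow> s i \<noteq> s j"
    and i0: "i0 < N" "lam i0 \<noteq> 0" and \<delta>: "\<delta> > 0"
  shows "\<exists>\<alpha> \<beta>. \<bar>\<alpha>\<bar> < \<delta> \<and> \<bar>\<beta>\<bar> < \<delta> \<and> (\<Sum>i<N. lam i * \<sigma> (z i + \<alpha> * s i + \<beta>)) \<noteq> 0"
proof (rule ccontr)
  assume "\<not> ?thesis"
  then have H: "\<And>\<alpha> \<beta>. \<bar>\<alpha>\<bar> < \<delta> \<Longrightarrow> \<bar>\<beta>\<bar> < \<delta> \<Longrightarrow> (\<Sum>i<N. lam i * \<sigma> (z i + \<alpha> * s i + \<beta>)) = 0"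
    by blast
  have "\<forall>i. \<exists>r. r > 0 \<and> (\<exists>a. \<forall>y. \<bar>y - z i\<bar> < r \<longrightarrow> (\<lambda>m. a m * (y - z i) ^ m) sums \<sigma> y)"
    using an unfolding real_analytic_on_R_def by blast
  from choice[OF this] obtain r where
    r: "\<And>i. r i > 0" "\<And>i. \<exists>a. \<forall>y. \<bar>y - z i\<bar> < r i \<longrightarrow> (\<lambda>m. a m * (y - z i) ^ m) sums \<sigma> y"
    by blast
  have "\<forall>i. \<exists>a. \<forall>y. \<bar>y - z i\<bar> < r i \<longrightarrow> (\<lambda>m. a m * (y - z i) ^ m) sums \<sigma> y"
    using r(2) by blast
  from choice[OF this] obtain a where
    a: "\<And>i y. \<bar>y - z i\<bar> < r i \<Longrightarrow> (\<lambda>m. a i m * (y - z i) ^ m) sums \<sigma> y"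
    by blast
  define R where "R = Min (r ` {..<N})"
  have Npos: "{..<N} \<noteq> {}" using i0 by auto
  have R: "R > 0" unfolding R_def using Npos r(1) by (subst Min_gr_iff) auto
  have Rle: "R \<le> r i" if "i < N" for i unfolding R_def using that by (intro Min_le) auto
  have coef0: "(\<Sum>i<N. lam i * a i m * (p * s i + 1) ^ m) = 0" for p m
  proof -
    define B where "B = 1 + (\<Sum>i<N. \<bar>p * s i + 1\<bar>)"
    have B1: "B \<ge> 1" unfolding B_def by (simp add: sum_nonneg)
    have Bi: "\<bar>p * s i + 1\<bar> \<le> B" if "i < N" for i
    proof -
      have "\<bar>p * s i + 1\<bar> \<le> (\<Sum>i<N. \<bar>p * s i + 1\<bar>)"
        by (rule member_le_sum) (use that in auto)
      then show ?thesis unfolding B_def by simp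
    qed
    define \<eta> where "\<eta> = min (\<delta> / (\<bar>p\<bar> + 1)) (min \<delta> (R / B))"
    have eta: "\<eta> > 0" unfolding \<eta>_def using \<delta> R B1 by simp
    define c where "c = (\<lambda>m. \<Sum>i<N. lam i * a i m * (p * s i + 1) ^ m)"
    have "c m = 0"
    proof (rule powser_onesided_zero[OF eta])
      fix \<tau> :: real assume tau: "0 < \<tau>" "\<tau> < \<eta>"
      have t1: "\<bar>\<tau> * p\<bar> < \<delta>"
      proof -
        have "\<bar>\<tau> * p\<bar> \<le> \<tau> * (\<bar>p\<bar> + 1)" using tau by (simp add: abs_mult)
        also have "\<dots> < \<eta> * (\<bar>p\<bar> + 1)" using tau by (intro mult_strict_right_mono) auto
        also have "\<dots> \<le> \<delta> / (\<bar>p\<bar> + 1) * (\<bar>p\<bar> + 1)"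
          by (intro mult_right_mono) (auto simp: \<eta>_def)
        finally show ?thesis by simp
      qed
      have t2: "\<bar>\<tau>\<bar> < \<delta>" using tau by (auto simp: \<eta>_def)
      have t3: "\<bar>(z i + \<tau> * (p * s i + 1)) - z i\<bar> < r i" if "i < N" for i
      proof -
        have "\<bar>\<tau> * (p * s i + 1)\<bar> \<le> \<tau> * B" using tau Bi[OF that] by (simp add: abs_mult)
        also have "\<dots> < \<eta> * B" using tau B1 by (intro mult_strict_right_mono) auto
        also have "\<dots> \<le> R / B * B" using B1 by (intro mult_right_mono) (auto simp: \<eta>_def)
        also have "\<dots> = R" using B1 by simp
        finally show ?thesis using Rle[OF that] by simp
      qed
      have "(\<lambda>m. \<Sum>i<N. lam i * (a i m * ((z i + \<tau> * (p * s i + 1)) - z i) ^ m))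
              sums (\<Sum>i<N. lam i * \<sigma> (z i + \<tau> * (p * s i + 1)))"
        by (intro sums_sum sums_mult a t3) simp
      also have "(\<Sum>i<N. lam i * \<sigma> (z i + \<tau> * (p * s i + 1))) =
                 (\<Sum>i<N. lam i * \<sigma> (z i + (\<tau> * p) * s i + \<tau>))"
        by (simp add: algebra_simps)
      also have "\<dots> = 0" by (rule H[OF t1 t2])
      also have "(\<lambda>m. \<Sum>i<N. lam i * (a i m * ((z i + \<tau> * (p * s i + 1)) - z i) ^ m)) =
                 (\<lambda>m. c m * \<tau> ^ m)"
        by (rule ext) (simp add: c_def power_mult_distrib sum_distrib_left sum_distrib_right mult_ac)
      finally show "(\<lambda>m. c m * \<tau> ^ m) sums 0" .
    qed
    then show ?thesis by (simp add: c_def)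
  qed
  have ai0: "a i0 m = 0" if m: "N - 1 \<le> m" for m
  proof -
    have "\<forall>i<N. lam i * a i m = 0"
      by (rule vandermonde_zero[OF dist m]) (use coef0 in simp)
    then show ?thesis using i0 by auto
  qed
  define P where "P = (\<Sum>m<N - 1. smult (a i0 m) ([:- z i0, 1:] ^ m))"
  have eqP: "\<sigma> y = poly P y" if "\<bar>y - z i0\<bar> < r i0" for y
  proof -
    have "(\<lambda>m. a i0 m * (y - z i0) ^ m) sums (\<Sum>m\<in>{..<N-1}. a i0 m * (y - z i0) ^ m)"
      by (rule sums_finite) (use ai0 in auto)
    from sums_unique2[OF a[OF that] this] show ?thesis
      by (simp add: P_def poly_sum)
  qed
  show False by (rule not_locally_poly[OF an deriv_pos bdd r(1) eqP])
qed




lemma orth_exists: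
  fixes U :: "real vec set"
  assumes U: "U \<subseteq> carrier_vec N" "finite U" "card U < N"
  shows "\<exists>lam \<in> carrier_vec N. lam \<noteq> 0\<^sub>v N \<and> (\<forall>u\<in>U. lam \<bullet> u = 0)"
proof -
  obtain us where us: "set us = U" "distinct us" using finite_distinct_list[OF U(2)] by blast
  have len: "length us < N" using distinct_card[OF us(2)] us(1) U(3) by simp
  define c where "c = (\<lambda>i. if i < length us then us ! i else 0\<^sub>v N)"
  define M where "M = mat\<^sub>r N N (\<lambda>i. if i = N - 1 then 0\<^sub>v N else c i)"
  have cc: "c \<in> {0..<N} \<rightarrow> carrier_vec N" 
  proof
    fix i assume "i \<in> {0..<N}"
    show "c i \<in> carrier_vec N"
    proof (cases "i < length us")
      case True
      then have "us ! i \<in> U" using us(1) by auto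
      then show ?thesis using True U(1) by (auto simp: c_def)
    qed (simp add: c_def)
  qed
  have "det M = 0" unfolding M_def by (rule det_row_0[OF _ cc]) (use len in simp)
  moreover have M: "M \<in> carrier_mat N N" unfolding M_def by simp
  ultimately obtain v where v: "v \<in> carrier_vec N" "v \<noteq> 0\<^sub>v N" "M *\<^sub>v v = 0\<^sub>v N"
    using det_0_iff_vec_prod_zero_field[OF M] by blast
  have "v \<bullet> u = 0" if uU: "u \<in> U" for u
  proof -
    have "u \<in> set us" using uU us(1) by simp
    then obtain i where i: "i < length us" "us ! i = u" unfolding in_set_conv_nth by blast
    have iN: "i < N" "i \<noteq> N - 1" using i len by auto
    have uc: "u \<in> carrier_vec N" using uU U(1) by auto
    have "(M *\<^sub>v v) $ i = row M i \<bullet> v" using iN M by simp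
    also have "row M i = u" unfolding M_def using iN i uc by (simp add: c_def)
    finally have "u \<bullet> v = 0" using v(3) iN by simp
    then show ?thesis using comm_scalar_prod[OF uc v(1)] by simp
  qed
  then show ?thesis using v by blast
qed

lemma greedy_cols:
  fixes col :: "nat \<Rightarrow> real \<Rightarrow> real \<Rightarrow> real vec"
  assumes N: "N \<ge> 1"
    and carr: "\<And>j \<alpha> \<beta>. col j \<alpha> \<beta> \<in> carrier_vec N"
    and nz: "\<And>j lam \<delta>. lam \<in> carrier_vec N \<Longrightarrow> lam \<noteq> 0\<^sub>v N \<Longrightarrow> \<delta> > 0 \<Longrightarrow>
              \<exists>\<alpha> \<beta>. \<bar>\<alpha>\<bar> < \<delta> \<and> \<bar>\<beta>\<bar> < \<delta> \<and> lam \<bullet> col j \<alpha> \<beta> \<noteq> 0"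
    and \<delta>: "\<delta> > 0"
  shows "\<exists>\<alpha> \<beta>. (\<forall>j. \<bar>\<alpha> j\<bar> < \<delta> \<and> \<bar>\<beta> j\<bar> < \<delta>) \<and>
     \<not> module.lin_dep class_ring (module_vec TYPE(real) N) (insert (vec N (\<lambda>_. 1)) ((\<lambda>j. col j (\<alpha> j) (\<beta> j)) ` {..<N-1})) \<and>
     card (insert (vec N (\<lambda>_. 1)) ((\<lambda>j. col j (\<alpha> j) (\<beta> j)) ` {..<N-1})) = N"
proof -
  interpret vec_space "TYPE(real)" N .
  define UU where "UU = (\<lambda>r (\<alpha>::nat\<Rightarrow>real) (\<beta>::nat\<Rightarrow>real). insert (vec N (\<lambda>_. 1)) ((\<lambda>j. col j (\<alpha> j) (\<beta> j)) ` {..<r}))"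
  have UUc: "UU r \<alpha> \<beta> \<subseteq> carrier_vec N" for r \<alpha> \<beta> using carr by (auto simp: UU_def)
  have one_nz: "vec N (\<lambda>_. 1) \<noteq> (0\<^sub>v N :: real vec)"
  proof
    assume "vec N (\<lambda>_. 1) = (0\<^sub>v N :: real vec)"
    then have "vec N (\<lambda>_. 1::real) $ 0 = 0\<^sub>v N $ 0" by simp
    then show False using N by simp
  qed
  have main: "r \<le> N - 1 \<Longrightarrow> \<exists>\<alpha> \<beta>. (\<forall>j. \<bar>\<alpha> j\<bar> < \<delta> \<and> \<bar>\<beta> j\<bar> < \<delta>) \<and> lin_indpt (UU r \<alpha> \<beta>) \<and> card (UU r \<alpha> \<beta>) = r + 1" for r
  proof (induction r)
    case 0
    have U0: "UU 0 \<alpha> \<beta> = {vec N (\<lambda>_. 1)}" for \<alpha> \<beta> by (simp add: UU_def)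
    have li0: "lin_indpt {}" by (simp add: lin_dep_def)
    have "vec N (\<lambda>_. 1) \<notin> span {}" using one_nz by (simp add: span_empty)
    then have "lin_indpt ({} \<union> {vec N (\<lambda>_. 1)})"
      using lin_dep_iff_in_span[of "{}" "vec N (\<lambda>_. 1)"] li0 by auto
    then show ?case using \<delta> by (intro exI[of _ "\<lambda>_. 0"]) (simp add: U0)
  next
    case (Suc r)
    then obtain \<alpha> \<beta> where ab: "\<forall>j. \<bar>\<alpha> j\<bar> < \<delta> \<and> \<bar>\<beta> j\<bar> < \<delta>" "lin_indpt (UU r \<alpha> \<beta>)" "card (UU r \<alpha> \<beta>) = r + 1"
      by auto
    have fin: "finite (UU r \<alpha> \<beta>)" by (simp add: UU_def)
    have cardlt: "card (UU r \<alpha> \<beta>) < N" using ab(3) Suc.prems by simp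
    obtain lam where lam: "lam \<in> carrier_vec N" "lam \<noteq> 0\<^sub>v N" "\<forall>u\<in>UU r \<alpha> \<beta>. lam \<bullet> u = 0"
      using orth_exists[OF UUc fin cardlt] by (elim bexE conjE)
    obtain \<alpha>0 \<beta>0 where ab0: "\<bar>\<alpha>0\<bar> < \<delta>" "\<bar>\<beta>0\<bar> < \<delta>" "lam \<bullet> col r \<alpha>0 \<beta>0 \<noteq> 0"
      using nz[OF lam(1,2) \<delta>] by blast
    define v where "v = col r \<alpha>0 \<beta>0"
    have "lam \<in> orthogonal_complement (UU r \<alpha> \<beta>)"
      using lam unfolding orthogonal_complement_def by auto
    then have "lam \<in> orthogonal_complement (span (UU r \<alpha> \<beta>))"
      using in_orthogonal_complement_span[OF UUc] by simp
    then have "\<forall>y\<in>span (UU r \<alpha> \<beta>). lam \<bullet> y = 0"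
      unfolding orthogonal_complement_def by blast
    then have vns: "v \<notin> span (UU r \<alpha> \<beta>)"
      using ab0(3) unfolding v_def by blast
    then have vnU: "v \<notin> UU r \<alpha> \<beta>" using in_own_span[OF UUc[of r \<alpha> \<beta>]] vns by blast
    have li: "lin_indpt (UU r \<alpha> \<beta> \<union> {v})"
    proof -
      have vc: "v \<in> carrier_vec N" using carr v_def by simp
      show ?thesis using lin_dep_iff_in_span[OF UUc[of r \<alpha> \<beta>] ab(2) vc vnU] vns by simp
    qed
    define \<alpha>' where "\<alpha>' = \<alpha>(r := \<alpha>0)"
    define \<beta>' where "\<beta>' = \<beta>(r := \<beta>0)"
    have eqU: "UU (Suc r) \<alpha>' \<beta>' = UU r \<alpha> \<beta> \<union> {v}"
    proof -
      have im: "(\<lambda>j. col j (\<alpha>' j) (\<beta>' j)) ` {..<r} = (\<lambda>j. col j (\<alpha> j) (\<beta> j)) ` {..<r}"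
        by (rule image_cong) (auto simp: \<alpha>'_def \<beta>'_def)
      have "UU (Suc r) \<alpha>' \<beta>' = insert (vec N (\<lambda>_. 1)) (insert v ((\<lambda>j. col j (\<alpha>' j) (\<beta>' j)) ` {..<r}))"
        unfolding UU_def lessThan_Suc image_insert by (simp add: \<alpha>'_def \<beta>'_def v_def)
      then show ?thesis unfolding im UU_def by blast
    qed
    have "card (UU (Suc r) \<alpha>' \<beta>') = Suc r + 1" unfolding eqU using fin vnU ab(3) by simp
    moreover have "\<forall>j. \<bar>\<alpha>' j\<bar> < \<delta> \<and> \<bar>\<beta>' j\<bar> < \<delta>" using ab(1) ab0 by (simp add: \<alpha>'_def \<beta>'_def)
    moreover have "lin_indpt (UU (Suc r) \<alpha>' \<beta>')" using li eqU by simp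
    ultimately show ?case by (intro exI[of _ \<alpha>'] exI[of _ \<beta>'] conjI)
  qed
  from main[of "N - 1"] N show ?thesis by (simp add: UU_def)
qed




lemma direction_exists:
  fixes v :: "nat \<Rightarrow> nat \<Rightarrow> real"
  assumes dist: "\<forall>i<N. \<forall>j<N. i \<noteq> j \<longrightarrow> (\<exists>c<m. v i c \<noteq> v j c)"
  shows "\<exists>e. \<forall>i<N. \<forall>j<N. i \<noteq> j \<longrightarrow> (\<Sum>c<m. e c * v i c) \<noteq> (\<Sum>c<m. e c * v j c)"
proof -
  define Q where "Q = (\<lambda>i j. \<Sum>c<m. monom (v i c - v j c) c)"
  have cQ: "coeff (Q i j) c = (if c < m then v i c - v j c else 0)" for i j c
    by (simp add: Q_def coeff_sum)
  have pQ: "poly (Q i j) t = (\<Sum>c<m. t ^ c * v i c) - (\<Sum>c<m. t ^ c * v j c)" for i j t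
    by (simp add: Q_def poly_sum poly_monom sum_subtractf[symmetric] algebra_simps)
  define B where "B = (\<Union>i\<in>{..<N}. \<Union>j\<in>{..<N} - {i}. {t. poly (Q i j) t = 0})"
  have "finite B" unfolding B_def
  proof (intro finite_UN_I)
    fix i j assume "i \<in> {..<N}" "j \<in> {..<N} - {i}"
    then obtain c where "c < m" "v i c \<noteq> v j c" using dist by auto
    then have "coeff (Q i j) c \<noteq> 0" by (simp add: cQ)
    then have "Q i j \<noteq> 0" by auto
    then show "finite {t. poly (Q i j) t = 0}" by (rule poly_roots_finite)
  qed auto
  then obtain t where t: "t \<notin> B" using ex_new_if_finite[OF infinite_UNIV_char_0] by blast
  show ?thesis
  proof (intro exI[of _ "\<lambda>c. t ^ c"] allI impI)
    fix i j assume ij: "i < N" "j < N" "i \<noteq> j"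
    then have "poly (Q i j) t \<noteq> 0" using t unfolding B_def by auto
    then show "(\<Sum>c<m. t ^ c * v i c) \<noteq> (\<Sum>c<m. t ^ c * v j c)" using pQ by simp
  qed
qed

lemma avoid_finite:
  fixes B :: "real set"
  assumes "finite B" "\<delta> > 0"
  shows "\<exists>\<alpha>. 0 < \<alpha> \<and> \<alpha> < \<delta> \<and> \<alpha> \<notin> B"
proof -
  have "infinite ({0<..<\<delta>} - B)" using assms by (simp add: Diff_infinite_finite)
  then obtain \<alpha> where "\<alpha> \<in> {0<..<\<delta>} - B" using finite.emptyI by (metis ex_in_conv)
  then show ?thesis by auto
qed

lemma rank_le_rows:
  fixes A :: "real mat"
  assumes A: "A \<in> carrier_mat N nc"
  shows "vec_space.rank N A \<le> N"
proof -
  interpret vec_space "TYPE(real)" N .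
  have "vectorspace.dim class_ring (vs (span (set (cols A)))) \<le> dim"
    by (rule subspace_dim[OF span_is_subspace fin_dim fin_dim_span_cols[OF A]])
       (use A cols_dim[of A] in auto)
  then show ?thesis unfolding rank_def dim_is_n .
qed

lemma layer_cong:
  assumes "\<And>l'. 1 \<le> l' \<Longrightarrow> l' \<le> l \<Longrightarrow> W l' = W' l' \<and> b l' = b' l'"
  shows "layer \<sigma> n W b l y = layer \<sigma> n W' b' l y"
  using assms
proof (induction l)
  case 0
  then show ?case by simp
next
  case (Suc l)
  then have IH: "layer \<sigma> n W b l y = layer \<sigma> n W' b' l y" by simp
  have "W (Suc l) = W' (Suc l)" "b (Suc l) = b' (Suc l)" using Suc.prems[of "Suc l"] by auto
  then show ?case using IH by simp
qed




definition lt :: "(nat \<Rightarrow> nat) \<Rightarrow> nat \<Rightarrow> (nat \<Rightarrow> nat \<Rightarrow> nat \<Rightarrow> real) \<Rightarrow> (nat \<Rightarrow> nat \<Rightarrow> real)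
              \<Rightarrow> (nat \<Rightarrow> nat \<Rightarrow> nat \<Rightarrow> real) \<Rightarrow> (nat \<Rightarrow> nat \<Rightarrow> real) \<Rightarrow> real" where
  "lt n l W b W' b' = (\<Sum>i<n (l - 1). \<Sum>j<n l. (W l i j - W' l i j)\<^sup>2) + (\<Sum>j<n l. (b l j - b' l j)\<^sup>2)"

definition pd :: "(nat \<Rightarrow> nat) \<Rightarrow> nat \<Rightarrow> (nat \<Rightarrow> nat \<Rightarrow> nat \<Rightarrow> real) \<Rightarrow> (nat \<Rightarrow> nat \<Rightarrow> real)
              \<Rightarrow> (nat \<Rightarrow> nat \<Rightarrow> nat \<Rightarrow> real) \<Rightarrow> (nat \<Rightarrow> nat \<Rightarrow> real) \<Rightarrow> real" where
  "pd n k W b W' b' = (\<Sum>l\<in>{1..k}. lt n l W b W' b')"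

lemma param_dist_pd: "param_dist n k W b W' b' = sqrt (pd n k W b W' b')"
  unfolding param_dist_def pd_def lt_def ..

lemma pd_0[simp]: "pd n 0 W b W' b' = 0" by (simp add: pd_def)

lemma pd_Suc: "pd n (Suc l) W b W' b' = pd n l W b W' b' + lt n (Suc l) W b W' b'"
  by (simp add: pd_def)

lemma lt_nonneg: "lt n l W b W' b' \<ge> 0"
  unfolding lt_def by (intro add_nonneg_nonneg sum_nonneg) auto

lemma pd_nonneg: "pd n l W b W' b' \<ge> 0"
  unfolding pd_def by (intro sum_nonneg lt_nonneg)

lemma pd_cong:
  assumes "\<And>l'. 1 \<le> l' \<Longrightarrow> l' \<le> l \<Longrightarrow> W l' = W2 l' \<and> b l' = b2 l'"
  shows "pd n l W b W' b' = pd n l W2 b2 W' b'"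
  unfolding pd_def lt_def by (rule sum.cong) (use assms in auto)

lemma sum_if0_sq:
  fixes X :: real and m :: nat
  assumes "0 < m"
  shows "(\<Sum>j<m. (if j = 0 then X else 0)\<^sup>2) = X\<^sup>2"
proof -
  have "(\<Sum>j<m. (if j = 0 then X else 0)\<^sup>2) = (\<Sum>j<m. if j = 0 then X\<^sup>2 else 0)"
    by (rule sum.cong) auto
  also have "\<dots> = X\<^sup>2" by (subst sum.delta) (use assms in auto)
  finally show ?thesis .
qed

lemma distinct_layers:
  fixes \<sigma> :: "real \<Rightarrow> real" and x :: "nat \<Rightarrow> nat \<Rightarrow> real" and N :: nat
  assumes mono: "\<And>a b. a < b \<Longrightarrow> \<sigma> a < \<sigma> b"
    and widths: "\<And>l. 1 \<le> l \<Longrightarrow> l \<le> K \<Longrightarrow> 0 < n l"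
    and dist0: "\<forall>i<N. \<forall>j<N. i \<noteq> j \<longrightarrow> (\<exists>c<n 0. x i c \<noteq> x j c)"
  shows "l \<le> K \<Longrightarrow> \<eta> > 0 \<Longrightarrow> \<exists>W b. pd n l W b W0 b0 < \<eta> \<and> (\<forall>l'>l. W l' = W0 l' \<and> b l' = b0 l') \<and>
     (\<forall>i<N. \<forall>j<N. i \<noteq> j \<longrightarrow> (\<exists>c<n l. layer \<sigma> n W b l (x i) c \<noteq> layer \<sigma> n W b l (x j) c))"
proof (induction l arbitrary: \<eta>)
  case 0
  then show ?case using dist0 by (intro exI[of _ W0] exI[of _ b0]) simp
next
  case (Suc l)
  have "\<eta>/2 > 0" using Suc.prems by simp
  then obtain W1 b1 where W1: "pd n l W1 b1 W0 b0 < \<eta>/2" "\<forall>l'>l. W1 l' = W0 l' \<and> b1 l' = b0 l'"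
    "\<forall>i<N. \<forall>j<N. i \<noteq> j \<longrightarrow> (\<exists>c<n l. layer \<sigma> n W1 b1 l (x i) c \<noteq> layer \<sigma> n W1 b1 l (x j) c)"
    using Suc.IH Suc.prems by (meson Suc_leD)
  define v where "v = (\<lambda>i. layer \<sigma> n W1 b1 l (x i))"
  obtain e where e: "\<forall>i<N. \<forall>j<N. i \<noteq> j \<longrightarrow> (\<Sum>c<n l. e c * v i c) \<noteq> (\<Sum>c<n l. e c * v j c)"
    using direction_exists[where N=N and v=v and m="n l"] W1(3) unfolding v_def by blast
  define s where "s = (\<lambda>i. \<Sum>c<n l. e c * v i c)"
  define z where "z = (\<lambda>i. (\<Sum>c<n l. W1 (Suc l) c 0 * v i c) + b1 (Suc l) 0)"
  define E where "E = (\<Sum>c<n l. (e c)\<^sup>2)"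
  have E0: "E \<ge> 0" unfolding E_def by (simp add: sum_nonneg)
  define \<delta> where "\<delta> = min 1 (\<eta> / (2 * (E + 1)))"
  have \<delta>0: "\<delta> > 0" using Suc.prems E0 by (simp add: \<delta>_def)
  define B where "B = (\<lambda>(i, j). (z j - z i) / (s i - s j)) ` ({..<N} \<times> {..<N})"
  have "finite B" by (simp add: B_def)
  then obtain \<alpha> where \<alpha>: "0 < \<alpha>" "\<alpha> < \<delta>" "\<alpha> \<notin> B" using avoid_finite[OF _ \<delta>0] by blast
  define W where "W = W1(Suc l := (\<lambda>c j. W1 (Suc l) c j + (if j = 0 \<and> c < n l then \<alpha> * e c else 0)))"
  have lay_l: "layer \<sigma> n W b1 l y = layer \<sigma> n W1 b1 l y" for y
    by (rule layer_cong) (simp add: W_def)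
  have lay0: "layer \<sigma> n W b1 (Suc l) (x i) 0 = \<sigma> (z i + \<alpha> * s i)" for i
  proof -
    have "(\<Sum>c<n l. W (Suc l) c 0 * layer \<sigma> n W b1 l (x i) c) =
          (\<Sum>c<n l. W1 (Suc l) c 0 * v i c + \<alpha> * (e c * v i c))"
    proof (rule sum.cong)
      fix c assume "c \<in> {..<n l}"
      then show "W (Suc l) c 0 * layer \<sigma> n W b1 l (x i) c = W1 (Suc l) c 0 * v i c + \<alpha> * (e c * v i c)"
        unfolding lay_l v_def by (simp add: W_def algebra_simps)
    qed simp
    then show ?thesis by (simp add: z_def s_def sum.distrib sum_distrib_left algebra_simps)
  qed
  have distS: "\<forall>i<N. \<forall>j<N. i \<noteq> j \<longrightarrow> (\<exists>c<n (Suc l). layer \<sigma> n W b1 (Suc l) (x i) c \<noteq> layer \<sigma> n W b1 (Suc l) (x j) c)"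
  proof (intro allI impI)
    fix i j assume ij: "i < N" "j < N" "i \<noteq> j"
    have sij: "s i \<noteq> s j" using e ij unfolding s_def by blast
    have "z i + \<alpha> * s i \<noteq> z j + \<alpha> * s j"
    proof
      assume "z i + \<alpha> * s i = z j + \<alpha> * s j"
      then have "\<alpha> = (z j - z i) / (s i - s j)" using sij by (simp add: field_simps)
      then have "\<alpha> \<in> B" using ij unfolding B_def by force
      then show False using \<alpha> by simp
    qed
    then have "\<sigma> (z i + \<alpha> * s i) \<noteq> \<sigma> (z j + \<alpha> * s j)"
      using mono by (metis less_irrefl linorder_neqE)
    moreover have "0 < n (Suc l)" using widths Suc.prems by simp
    ultimately show "\<exists>c<n (Suc l). layer \<sigma> n W b1 (Suc l) (x i) c \<noteq> layer \<sigma> n W b1 (Suc l) (x j) c"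
      using lay0 by (intro exI[of _ 0]) auto
  qed
  have pdl: "pd n l W b1 W0 b0 = pd n l W1 b1 W0 b0" by (rule pd_cong) (simp add: W_def)
  have ltS: "lt n (Suc l) W b1 W0 b0 = \<alpha>\<^sup>2 * E"
  proof -
    have w0: "W1 (Suc l) = W0 (Suc l)" "b1 (Suc l) = b0 (Suc l)" using W1(2) by auto
    have np: "0 < n (Suc l)" using widths Suc.prems by simp
    have "lt n (Suc l) W b1 W0 b0 = (\<Sum>c<n l. \<Sum>j<n (Suc l). (if j = 0 then \<alpha> * e c else 0)\<^sup>2)"
      unfolding lt_def by (simp add: W_def w0 cong: if_cong)
    also have "\<dots> = (\<Sum>c<n l. (\<alpha> * e c)\<^sup>2)" using sum_if0_sq[OF np] by simp
    also have "\<dots> = \<alpha>\<^sup>2 * E" by (simp add: E_def power_mult_distrib sum_distrib_left)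
    finally show ?thesis .
  qed
  have "\<alpha>\<^sup>2 * E < \<eta> / 2"
  proof -
    have "\<alpha>\<^sup>2 \<le> \<alpha>" using \<alpha> \<delta>_def by (simp add: power2_eq_square mult_le_cancel_right1)
    then have "\<alpha>\<^sup>2 * E \<le> \<alpha> * (E + 1)" using E0 \<alpha> by (smt (verit) mult_mono)
    also have "\<dots> < \<delta> * (E + 1)" using \<alpha> E0 by simp
    also have "\<dots> \<le> \<eta> / (2 * (E + 1)) * (E + 1)" using E0 by (intro mult_right_mono) (auto simp: \<delta>_def)
    also have "\<dots> = \<eta> / 2" using E0 by (simp add: field_simps)
    finally show ?thesis .
  qed
  then have "pd n (Suc l) W b1 W0 b0 < \<eta>" using pdl ltS W1(1) by (simp add: pd_Suc)
  moreover have "\<forall>l'>Suc l. W l' = W0 l' \<and> b1 l' = b0 l'" using W1(2) by (simp add: W_def)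
  ultimately show ?case using distS by blast
qed




lemma sum_if_lt_sq:
  fixes g :: "nat \<Rightarrow> real"
  assumes "m \<le> M"
  shows "(\<Sum>j<M. (if j < m then g j else 0)\<^sup>2) = (\<Sum>j<m. (g j)\<^sup>2)"
proof -
  have "(\<Sum>j<M. (if j < m then g j else 0)\<^sup>2) = (\<Sum>j<M. if j < m then (g j)\<^sup>2 else 0)"
    by (rule sum.cong) auto
  also have "\<dots> = sum (\<lambda>j. (g j)\<^sup>2) {j \<in> {..<M}. j < m}"
    by (rule sum.inter_filter[symmetric]) simp
  also have "{j \<in> {..<M}. j < m} = {..<m}" using assms by auto
  finally show ?thesis .
qed

theorem mainTheorem10:
  fixes \<sigma> :: "real \<Rightarrow> real"
    and d N L k :: nat
    and n :: "nat \<Rightarrow> nat"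
    and x :: "nat \<Rightarrow> nat \<Rightarrow> real"
    and W0 :: "nat \<Rightarrow> nat \<Rightarrow> nat \<Rightarrow> real"
    and b0 :: "nat \<Rightarrow> nat \<Rightarrow> real"
    and \<epsilon> :: real
  assumes n0: "n 0 = d"
    and widths_pos: "\<forall>l\<in>{1..L}. 0 < n l"
    and distinct_inputs: "\<forall>i<N. \<forall>j<N. i \<noteq> j \<longrightarrow> (\<exists>c<d. x i c \<noteq> x j c)"
    and analytic: "real_analytic_on_R \<sigma>"
    and deriv_pos: "\<forall>t. \<exists>D. (\<sigma> has_real_derivative D) (at t) \<and> D > 0"
    and growth: "(\<exists>M. \<forall>t. \<bar>\<sigma> t\<bar> \<le> M) \<or>
       (\<exists>\<rho>1 \<rho>2 \<rho>3 \<rho>4 :: real. \<rho>1 > 0 \<and> \<rho>2 > 0 \<and> \<rho>3 > 0 \<and> \<rho>4 > 0 \<and>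
          (\<forall>t<0. \<bar>\<sigma> t\<bar> \<le> \<rho>1 * exp (\<rho>2 * t)) \<and>
          (\<forall>t\<ge>0. \<bar>\<sigma> t\<bar> \<le> \<rho>3 * t + \<rho>4))"
    and k_range: "1 \<le> k" "k \<le> L - 1"
    and width_k: "n k \<ge> N - 1"
    and eps: "\<epsilon> > 0"
  shows "\<exists>W b. param_dist n k W b W0 b0 < \<epsilon> \<and>
           vec_space.rank N (feat_ones \<sigma> n W b k N x) = N"
proof -
  have mono: "\<sigma> a < \<sigma> b" if "a < b" for a b
    by (rule DERIV_pos_imp_increasing[OF that]) (use deriv_pos in blast)
  obtain M where bddM: "\<And>t. t < 0 \<Longrightarrow> \<bar>\<sigma> t\<bar> \<le> M"
  proof -
    from growth show ?thesis
    proof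
      assume "\<exists>M. \<forall>t. \<bar>\<sigma> t\<bar> \<le> M" then show ?thesis using that by blast
    next
      assume "\<exists>\<rho>1 \<rho>2 \<rho>3 \<rho>4 :: real. \<rho>1 > 0 \<and> \<rho>2 > 0 \<and> \<rho>3 > 0 \<and> \<rho>4 > 0 \<and>
          (\<forall>t<0. \<bar>\<sigma> t\<bar> \<le> \<rho>1 * exp (\<rho>2 * t)) \<and> (\<forall>t\<ge>0. \<bar>\<sigma> t\<bar> \<le> \<rho>3 * t + \<rho>4)"
      then obtain \<rho>1 \<rho>2 where r: "\<rho>1 > 0" "\<rho>2 > 0" "\<forall>t<0. \<bar>\<sigma> t\<bar> \<le> \<rho>1 * exp (\<rho>2 * t)" by blast
      have "\<bar>\<sigma> t\<bar> \<le> \<rho>1" if "t < 0" for t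
      proof -
        have "exp (\<rho>2 * t) \<le> 1" using mult_pos_neg[OF r(2) that] by simp
        then have "\<rho>1 * exp (\<rho>2 * t) \<le> \<rho>1" using r(1) by (simp add: mult_le_cancel_left1)
        then show ?thesis using r(3)[rule_format, OF that] by linarith
      qed
      then show ?thesis using that by blast
    qed
  qed
  have Acarr: "feat_ones \<sigma> n W b k N x \<in> carrier_mat N (n k + 1)" for W b
    by (simp add: feat_ones_def)
  show ?thesis
  proof (cases "N = 0")
    case True
    have "param_dist n k W0 b0 W0 b0 = 0" by (simp add: param_dist_def)
    moreover have "vec_space.rank N (feat_ones \<sigma> n W0 b0 k N x) = N"
      using rank_le_rows[OF Acarr] True by simp
    ultimately show ?thesis using eps by (intro exI[of _ W0] exI[of _ b0]) simp
  next
    case False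
    then have N1: "N \<ge> 1" by simp
    obtain K where kK: "k = Suc K" using k_range(1) by (cases k) auto
    have widths: "0 < n l" if "1 \<le> l" "l \<le> K" for l
      using widths_pos that kK k_range by auto
    have dist0: "\<forall>i<N. \<forall>j<N. i \<noteq> j \<longrightarrow> (\<exists>c<n 0. x i c \<noteq> x j c)" using distinct_inputs n0 by simp
    have e2: "\<epsilon>\<^sup>2 / 2 > 0" using eps by simp
    obtain W1 b1 where W1: "pd n K W1 b1 W0 b0 < \<epsilon>\<^sup>2 / 2" "\<forall>l'>K. W1 l' = W0 l' \<and> b1 l' = b0 l'"
      "\<forall>i<N. \<forall>j<N. i \<noteq> j \<longrightarrow> (\<exists>c<n K. layer \<sigma> n W1 b1 K (x i) c \<noteq> layer \<sigma> n W1 b1 K (x j) c)"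
      using distinct_layers[where \<sigma>=\<sigma> and x=x and N=N and K=K and n=n,
          OF mono widths dist0 order.refl e2] by blast
    define v where "v = (\<lambda>i. layer \<sigma> n W1 b1 K (x i))"
    obtain e where e: "\<forall>i<N. \<forall>j<N. i \<noteq> j \<longrightarrow> (\<Sum>c<n K. e c * v i c) \<noteq> (\<Sum>c<n K. e c * v j c)"
      using direction_exists[where N=N and v=v and m="n K"] W1(3) unfolding v_def by blast
    define s where "s = (\<lambda>i. \<Sum>c<n K. e c * v i c)"
    have sdist: "\<forall>i<N. \<forall>j<N. i \<noteq> j \<longrightarrow> s i \<noteq> s j" using e unfolding s_def by blast
    define z where "z = (\<lambda>j i. (\<Sum>c<n K. W1 k c j * v i c) + b1 k j)"
    define cl where "cl = (\<lambda>j \<alpha> \<beta>. vec N (\<lambda>i. \<sigma> (z j i + \<alpha> * s i + \<beta>)) :: real vec)"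
    define E where "E = (\<Sum>c<n K. (e c)\<^sup>2)"
    have E0: "E \<ge> 0" unfolding E_def by (simp add: sum_nonneg)
    define \<delta> where "\<delta> = min 1 (\<epsilon>\<^sup>2 / (2 * (E + 1) * N))"
    have \<delta>0: "\<delta> > 0" using eps E0 N1 by (simp add: \<delta>_def)
    have nz: "\<exists>\<alpha> \<beta>. \<bar>\<alpha>\<bar> < \<delta>' \<and> \<bar>\<beta>\<bar> < \<delta>' \<and> lam \<bullet> cl j \<alpha> \<beta> \<noteq> 0"
      if lam: "lam \<in> carrier_vec N" "lam \<noteq> 0\<^sub>v N" "\<delta>' > 0" for j lam \<delta>'
    proof -
      obtain i0 where i0: "i0 < N" "lam $ i0 \<noteq> 0"
      proof (rule ccontr)
        assume "\<not> thesis"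
        then have "\<forall>i<N. lam $ i = 0" using that by blast
        then have "lam = 0\<^sub>v N" using lam(1) by (intro eq_vecI) auto
        then show False using lam(2) by simp
      qed
      obtain \<alpha> \<beta> where ab: "\<bar>\<alpha>\<bar> < \<delta>'" "\<bar>\<beta>\<bar> < \<delta>'" "(\<Sum>i<N. lam $ i * \<sigma> (z j i + \<alpha> * s i + \<beta>)) \<noteq> 0"
        using column_nonzero[where lam="\<lambda>i. lam $ i" and z="z j", OF analytic deriv_pos bddM sdist i0 lam(3)] by blast
      have "lam \<bullet> cl j \<alpha> \<beta> = (\<Sum>i<N. lam $ i * \<sigma> (z j i + \<alpha> * s i + \<beta>))"
        by (simp add: cl_def scalar_prod_def atLeast0LessThan)
      then show ?thesis by (intro exI[of _ \<alpha>] exI[of _ \<beta>]) (use ab in simp)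
    qed
    have carr: "cl j \<alpha> \<beta> \<in> carrier_vec N" for j \<alpha> \<beta> by (simp add: cl_def)
    obtain \<alpha> \<beta> where ab: "\<forall>j. \<bar>\<alpha> j\<bar> < \<delta> \<and> \<bar>\<beta> j\<bar> < \<delta>"
      "\<not> module.lin_dep class_ring (module_vec TYPE(real) N) (insert (vec N (\<lambda>_. 1)) ((\<lambda>j. cl j (\<alpha> j) (\<beta> j)) ` {..<N-1}))"
      "card (insert (vec N (\<lambda>_. 1)) ((\<lambda>j. cl j (\<alpha> j) (\<beta> j)) ` {..<N-1})) = N"
      using greedy_cols[where col=cl, OF N1 carr nz \<delta>0] by blast
    define W where "W = W1(k := (\<lambda>c j. W1 k c j + (if j < N - 1 \<and> c < n K then \<alpha> j * e c else 0)))"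
    define b where "b = b1(k := (\<lambda>j. b1 k j + (if j < N - 1 then \<beta> j else 0)))"
    have layK: "layer \<sigma> n W b K y = layer \<sigma> n W1 b1 K y" for y
      by (rule layer_cong) (simp add: W_def b_def kK)
    have layk: "layer \<sigma> n W b k (x i) j = \<sigma> (z j i + \<alpha> j * s i + \<beta> j)" if j: "j < N - 1" for i j
    proof -
      have "(\<Sum>c<n K. W k c j * layer \<sigma> n W b K (x i) c) =
            (\<Sum>c<n K. W1 k c j * v i c + \<alpha> j * (e c * v i c))"
      proof (rule sum.cong)
        fix c assume "c \<in> {..<n K}"
        then show "W k c j * layer \<sigma> n W b K (x i) c = W1 k c j * v i c + \<alpha> j * (e c * v i c)"
          unfolding layK v_def using j by (simp add: W_def algebra_simps)
      qed simp
      moreover have "layer \<sigma> n W b k (x i) j = \<sigma> ((\<Sum>c<n K. W k c j * layer \<sigma> n W b K (x i) c) + b k j)"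
        by (simp add: kK)
      ultimately show ?thesis using j
        by (simp add: z_def s_def b_def sum.distrib sum_distrib_left algebra_simps)
    qed
    define A where "A = feat_ones \<sigma> n W b k N x"
    have AC: "A \<in> carrier_mat N (n k + 1)" unfolding A_def by (rule Acarr)
    have colA: "col A j = cl j (\<alpha> j) (\<beta> j)" if j: "j < N - 1" for j
    proof -
      have jk: "j < n k" using j width_k by simp
      show ?thesis unfolding A_def feat_ones_def cl_def
        using jk j by (intro eq_vecI) (simp_all add: layk)
    qed
    have colOne: "col A (n k) = vec N (\<lambda>_. 1)"
      unfolding A_def feat_ones_def by (intro eq_vecI) simp_all
    have Usub: "insert (vec N (\<lambda>_. 1)) ((\<lambda>j. cl j (\<alpha> j) (\<beta> j)) ` {..<N-1}) \<subseteq> set (cols A)"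
    proof -
      have dc: "dim_col A = n k + 1" using AC by simp
      have sc: "set (cols A) = col A ` {0..<n k + 1}" unfolding cols_def dc[symmetric] by (simp only: set_map set_upt)
      have "vec N (\<lambda>_. 1) \<in> set (cols A)" unfolding sc colOne[symmetric] by simp
      moreover have "cl j (\<alpha> j) (\<beta> j) \<in> set (cols A)" if "j < N - 1" for j
      proof -
        have "j < n k + 1" using that width_k by simp
        then show ?thesis unfolding sc colA[OF that, symmetric] by simp
      qed
      ultimately show ?thesis by auto
    qed
    have "N \<le> vec_space.rank N A"
      using vec_space.rank_ge_card_indpt[OF AC Usub ab(2)] ab(3) by simp
    then have rank: "vec_space.rank N A = N" using rank_le_rows[OF AC] by simp
    have pdK: "pd n K W b W0 b0 = pd n K W1 b1 W0 b0"
      by (rule pd_cong) (simp add: W_def b_def kK)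
    have w0: "W1 k = W0 k" "b1 k = b0 k" using W1(2) kK by auto
    have ltk: "lt n k W b W0 b0 = (\<Sum>j<N-1. (\<alpha> j)\<^sup>2 * E + (\<beta> j)\<^sup>2)"
    proof -
      have "lt n k W b W0 b0 = (\<Sum>c<n K. \<Sum>j<n k. (if j < N - 1 then \<alpha> j * e c else 0)\<^sup>2)
                  + (\<Sum>j<n k. (if j < N - 1 then \<beta> j else 0)\<^sup>2)"
        using w0 unfolding lt_def W_def b_def kK by (simp cong: if_cong)
      also have "\<dots> = (\<Sum>c<n K. \<Sum>j<N-1. (\<alpha> j * e c)\<^sup>2) + (\<Sum>j<N-1. (\<beta> j)\<^sup>2)"
        using sum_if_lt_sq[OF width_k] by simp
      also have "(\<Sum>c<n K. \<Sum>j<N-1. (\<alpha> j * e c)\<^sup>2) = (\<Sum>j<N-1. (\<alpha> j)\<^sup>2 * E)"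
        by (simp add: sum.swap[of _ "{..<n K}"] E_def power_mult_distrib sum_distrib_left)
      finally show ?thesis by (simp add: sum.distrib)
    qed
    have "lt n k W b W0 b0 < \<epsilon>\<^sup>2 / 2"
    proof -
      have tm: "(\<alpha> j)\<^sup>2 * E + (\<beta> j)\<^sup>2 \<le> \<delta> * (E + 1)" for j
      proof -
        have a1: "\<bar>\<alpha> j\<bar> < 1" "\<bar>\<beta> j\<bar> < 1" using ab(1) \<delta>_def by (auto dest: spec[of _ j])
        have "\<bar>\<alpha> j\<bar> * \<bar>\<alpha> j\<bar> \<le> \<bar>\<alpha> j\<bar> * 1" by (rule mult_left_mono) (use a1 in auto)
        then have sa: "(\<alpha> j)\<^sup>2 \<le> \<bar>\<alpha> j\<bar>" by (simp add: power2_eq_square abs_mult_self_eq)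
        have "\<bar>\<beta> j\<bar> * \<bar>\<beta> j\<bar> \<le> \<bar>\<beta> j\<bar> * 1" by (rule mult_left_mono) (use a1 in auto)
        then have sb: "(\<beta> j)\<^sup>2 \<le> \<bar>\<beta> j\<bar>" by (simp add: power2_eq_square abs_mult_self_eq)
        have da: "\<bar>\<alpha> j\<bar> \<le> \<delta>" "\<bar>\<beta> j\<bar> \<le> \<delta>" using ab(1) by (auto dest: spec[of _ j] simp: less_imp_le)
        have "(\<alpha> j)\<^sup>2 * E \<le> \<delta> * E" using sa da(1) E0 by (intro mult_right_mono) auto
        then show ?thesis using sb da(2) by (simp add: distrib_left)
      qed
      have "lt n k W b W0 b0 \<le> (\<Sum>j<N-1. \<delta> * (E + 1))" unfolding ltk by (rule sum_mono) (rule tm)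
      also have "\<dots> = real (N - 1) * (\<delta> * (E + 1))" by simp
      also have "\<dots> \<le> real (N - 1) * (\<epsilon>\<^sup>2 / (2 * (E + 1) * N) * (E + 1))"
        using E0 by (intro mult_left_mono mult_right_mono) (auto simp: \<delta>_def)
      also have "\<dots> = real (N - 1) / real N * (\<epsilon>\<^sup>2 / 2)"
      proof -
        have ne: "E + 1 \<noteq> 0" using E0 by simp
        have "\<epsilon>\<^sup>2 / (2 * (E + 1) * N) * (E + 1) = \<epsilon>\<^sup>2 / (2 * N)" using ne by (simp add: divide_simps)
        moreover have "real (N - 1) * (\<epsilon>\<^sup>2 / (2 * N)) = real (N - 1) / real N * (\<epsilon>\<^sup>2 / 2)" by simp
        ultimately show ?thesis by simp
      qed
      also have "\<dots> < \<epsilon>\<^sup>2 / 2"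
      proof -
        have "real (N - 1) / real N < 1" using N1 by (simp add: of_nat_diff)
        from mult_strict_right_mono[OF this e2] show ?thesis by simp
      qed
      finally show ?thesis .
    qed
    then have "pd n k W b W0 b0 < \<epsilon>\<^sup>2" using pdK W1(1) kK by (simp add: pd_Suc)
    then have "param_dist n k W b W0 b0 < \<epsilon>"
          proof -
      have "sqrt (pd n k W b W0 b0) < sqrt (\<epsilon>\<^sup>2)" by (rule real_sqrt_less_mono) fact
      then show ?thesis unfolding param_dist_pd using eps by simp
    qed
    then show ?thesis using rank unfolding A_def by blast
  qed
qed


end
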